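(* Let $\mathbb{L}=(\mathcal{P},\mathcal{C},\parallel)$ be a Laguerre plane satisfying axioms (C) and (S). Then $\mathbb{L}$ satisfies the following condition $(\Pi)$: let $a,b,c,x$ be pairwise non-parallel points with $x\notin(a,b,c)^{\circ}$, and let $p,q$ be points such that $p\parallel c$, $p\in(a,b,x)^{\circ}$, $q\parallel b$, $q\in(a,c,x)^{\circ}$; if $K$ is a circle containing $x$ which is tangent to $(a,b,c)^{\circ}$ at $a$, then $K\cap(p,q,x)^{\circ}=\{x\}$.
   Context: A Laguerre plane is a triple $(\mathcal{P},\mathcal{C},\parallel)$ where $\mathcal{P}$ is a set of points, $\mathcal{C}\subset 2^{\mathcal{P}}$ a set of circles and $\parallel$ an equivalence relation on $\mathcal{P}$ (parallelism; its classes are called generators) such that: (1) any three pairwise non-parallel points $a,b,c$ lie on a unique circle, denoted $(a,b,c)^{\circ}$; (2) for every circle $K$ and non-parallel points $p\in K$, $q\notin K$ there is exactly one circle $L$ with $q\in L$ and $K\cap L=\{p\}$; (3) for every point $p$ and circle $K$ there is exactly one point $q\in K$ with $q\parallel p$; (4) some circle contains at least three but not all points. Circles $K,L$ are tangent at $p$ if $K\cap L=\{p\}$ or $K=L$ (with $p\in K$). For $p\in K$, $\langle p,K\rangle$ denotes the set of circles tangent to $K$ at $p$. Axiom (C): for any circles $K,L$ and any point $p\in K\setminus L$ there exists exactly one circle $M\in\langle p,K\rangle$ with $|M\cap L|=1$. Axiom (S): if $K,L,M,N$ are circles and $a,b,c,d$ points with $K\cap L=\{a\}$, $L\cap M=\{b\}$,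 $M\cap N=\{c\}$, $N\cap K=\{d\}$ and $a\nparallel c$, then there is a circle containing $a,b,c,d$. *)

theory Defs
  imports Main
begin

text \<open>Points are the elements of the type 'p (the point set P is UNIV);
  circles form a set C of point sets; par is the parallelism relation.\<close>

definition circ :: "'p set set \<Rightarrow> 'p \<Rightarrow> 'p \<Rightarrow> 'p \<Rightarrow> 'p set" where
  "circ C a b c = (THE K. K \<in> C \<and> a \<in> K \<and> b \<in> K \<and> c \<in> K)"

definition tangent_at :: "'p set set \<Rightarrow> 'p set \<Rightarrow> 'p set \<Rightarrow> 'p \<Rightarrow> bool" where
  "tangent_at C K L p \<longleftrightarrow> K \<in> C \<and> L \<in> C \<and> p \<in> K \<and> (K \<inter> L = {p} \<or> K = L)"

definition pencil :: "'p set set \<Rightarrow> 'p \<Rightarrow> 'p set \<Rightarrow> 'p set set" where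
  "pencil C p K = {M \<in> C. tangent_at C M K p}"

definition laguerre_plane :: "'p set set \<Rightarrow> ('p \<Rightarrow> 'p \<Rightarrow> bool) \<Rightarrow> bool" where
  "laguerre_plane C par \<longleftrightarrow>
     equivp par \<and>
     (\<forall>a b c. \<not> par a b \<and> \<not> par b c \<and> \<not> par a c \<longrightarrow>
        (\<exists>!K. K \<in> C \<and> a \<in> K \<and> b \<in> K \<and> c \<in> K)) \<and>
     (\<forall>K\<in>C. \<forall>p q. p \<in> K \<and> q \<notin> K \<and> \<not> par p q \<longrightarrow>
        (\<exists>!L. L \<in> C \<and> q \<in> L \<and> K \<inter> L = {p})) \<and>
     (\<forall>p. \<forall>K\<in>C. \<exists>!q. q \<in> K \<and> par q p) \<and>
     (\<exists>K\<in>C. (\<exists>a b c. a \<in> K \<and> b \<in> K \<and> c \<in> K \<and> a \<noteq> b \<and> b \<noteq> c \<and> a \<noteq> c)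
            \<and> K \<noteq> UNIV)"

definition axiom_C :: "'p set set \<Rightarrow> bool" where
  "axiom_C C \<longleftrightarrow>
     (\<forall>K\<in>C. \<forall>L\<in>C. \<forall>p. p \<in> K \<and> p \<notin> L \<longrightarrow>
        (\<exists>!M. M \<in> pencil C p K \<and> (\<exists>y. M \<inter> L = {y})))"

definition axiom_S :: "'p set set \<Rightarrow> ('p \<Rightarrow> 'p \<Rightarrow> bool) \<Rightarrow> bool" where
  "axiom_S C par \<longleftrightarrow>
     (\<forall>K\<in>C. \<forall>L\<in>C. \<forall>M\<in>C. \<forall>N\<in>C. \<forall>a b c d.
        K \<inter> L = {a} \<and> L \<inter> M = {b} \<and> M \<inter> N = {c} \<and> N \<inter> K = {d} \<and> \<not> par a c
        \<longrightarrow> (\<exists>Z\<in>C. a \<in> Z \<and> b \<in> Z \<and> c \<in> Z \<and> d \<in> Z))"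

end

theory Submission
  imports Defs
begin

lemma lp_ax1: "laguerre_plane C par \<Longrightarrow> equivp par"
  unfolding laguerre_plane_def by (erule conjE)

lemma lp_ax2: "laguerre_plane C par \<Longrightarrow> \<not> par a b \<Longrightarrow> \<not> par b c \<Longrightarrow> \<not> par a c \<Longrightarrow>
    \<exists>!K. K \<in> C \<and> a \<in> K \<and> b \<in> K \<and> c \<in> K"
  unfolding laguerre_plane_def by (elim conjE) (erule allE, erule allE, erule allE, erule mp, simp)

lemma lp_ax3: "laguerre_plane C par \<Longrightarrow> K \<in> C \<Longrightarrow> p \<in> K \<Longrightarrow> q \<notin> K \<Longrightarrow> \<not> par p q \<Longrightarrow>
    \<exists>!L. L \<in> C \<and> q \<in> L \<and> K \<inter> L = {p}"
  unfolding laguerre_plane_def by (elim conjE) (erule ballE, erule allE, erule allE, erule mp, simp, simp)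

lemma lp_ax4: "laguerre_plane C par \<Longrightarrow> K \<in> C \<Longrightarrow> \<exists>!q. q \<in> K \<and> par q p"
  unfolding laguerre_plane_def by (elim conjE) (erule allE, erule ballE, assumption, simp)

lemma lp_par:
  assumes "laguerre_plane C par"
  shows "par u u" "par u v \<Longrightarrow> par v u" "par u v \<Longrightarrow> par v w \<Longrightarrow> par u w"
proof -
  have e: "equivp par" using lp_ax1[OF assms] .
  show "par u u" using e by (meson equivp_reflp)
  show "par u v \<Longrightarrow> par v u" using e by (meson equivp_symp)
  show "par u v \<Longrightarrow> par v w \<Longrightarrow> par u w" using e by (meson equivp_transp)
qed

lemma lp_uniq:
  assumes "laguerre_plane C par" "K \<in> C" "u \<in> K" "v \<in> K" "par u v"
  shows "u = v"
proof -
  have e: "\<exists>!q. q \<in> K \<and> par q v" using lp_ax4[OF assms(1,2)] .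
  have "par v v" using lp_par(1)[OF assms(1)] .
  then show ?thesis using e assms(3,4,5) by (metis (no_types))
qed

lemma lp_circ:
  assumes "laguerre_plane C par" "\<not> par a b" "\<not> par b c" "\<not> par a c"
  shows "circ C a b c \<in> C \<and> a \<in> circ C a b c \<and> b \<in> circ C a b c \<and> c \<in> circ C a b c"
    and "\<And>Z. Z \<in> C \<Longrightarrow> a \<in> Z \<Longrightarrow> b \<in> Z \<Longrightarrow> c \<in> Z \<Longrightarrow> Z = circ C a b c"
proof -
  have ex: "\<exists>!K. K \<in> C \<and> a \<in> K \<and> b \<in> K \<and> c \<in> K"
    using lp_ax2[OF assms] .
  show "circ C a b c \<in> C \<and> a \<in> circ C a b c \<and> b \<in> circ C a b c \<and> c \<in> circ C a b c"
    unfolding circ_def by (rule theI'[OF ex])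
  fix Z assume "Z \<in> C" "a \<in> Z" "b \<in> Z" "c \<in> Z"
  then have "(THE K. K \<in> C \<and> a \<in> K \<and> b \<in> K \<and> c \<in> K) = Z"
    by (intro the1_equality[OF ex]) simp
  then show "Z = circ C a b c" unfolding circ_def by simp
qed

lemma lp_three:
  assumes "laguerre_plane C par" "Z \<in> C" "W \<in> C" "u \<in> Z" "v \<in> Z" "w \<in> Z"
    "u \<in> W" "v \<in> W" "w \<in> W" "u \<noteq> v" "v \<noteq> w" "u \<noteq> w"
  shows "Z = W"
proof -
  have n1: "\<not> par u v"
  proof
    assume "par u v" then have "u = v" by (rule lp_uniq[OF assms(1,2,4,5)])
    with assms(10) show False by simp
  qed
  have n2: "\<not> par v w"
  proof
    assume "par v w" then have "v = w" by (rule lp_uniq[OF assms(1,2,5,6)])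
    with assms(11) show False by simp
  qed
  have n3: "\<not> par u w"
  proof
    assume "par u w" then have "u = w" by (rule lp_uniq[OF assms(1,2,4,6)])
    with assms(12) show False by simp
  qed
  have "Z = circ C u v w" by (rule lp_circ(2)[OF assms(1) n1 n2 n3 assms(2,4,5,6)])
  moreover have "W = circ C u v w" by (rule lp_circ(2)[OF assms(1) n1 n2 n3 assms(3,7,8,9)])
  ultimately show ?thesis by simp
qed

lemma lp_npar:
  assumes "laguerre_plane C par" "par u v" "\<not> par v w"
  shows "\<not> par u w" "\<not> par w u"
proof -
  show "\<not> par u w"
  proof
    assume "par u w"
    then have "par v w" using lp_par(2,3)[OF assms(1)] assms(2) by blast
    then show False using assms(3) by blast
  qed
  then show "\<not> par w u" using lp_par(2)[OF assms(1)] by blast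
qed

lemma S_app:
  assumes "axiom_S C par" "K \<in> C" "L \<in> C" "M \<in> C" "N \<in> C"
    "K \<inter> L = {a}" "L \<inter> M = {b}" "M \<inter> N = {c}" "N \<inter> K = {d}" "\<not> par a c"
  shows "\<exists>Z\<in>C. a \<in> Z \<and> b \<in> Z \<and> c \<in> Z \<and> d \<in> Z"
proof -
  have "K \<inter> L = {a} \<and> L \<inter> M = {b} \<and> M \<inter> N = {c} \<and> N \<inter> K = {d} \<and> \<not> par a c"
    using assms(6-10) by blast
  then show ?thesis by (rule assms(1)[unfolded axiom_S_def, rule_format, OF assms(2-5)])
qed

theorem theorem2p1:
  fixes C :: "'p set set" and par :: "'p \<Rightarrow> 'p \<Rightarrow> bool"
  assumes "laguerre_plane C par" and "axiom_C C" and "axiom_S C par"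
    and "\<not> par a b" and "\<not> par a c" and "\<not> par a x"
    and "\<not> par b c" and "\<not> par b x" and "\<not> par c x"
    and "x \<notin> circ C a b c"
    and "par p c" and "p \<in> circ C a b x"
    and "par q b" and "q \<in> circ C a c x"
    and "K \<in> C" and "x \<in> K" and "K \<in> pencil C a (circ C a b c)"
  shows "K \<inter> circ C p q x = {x}"
proof -
  note lp = assms(1)
  note P = lp_par[OF lp]
  define A where "A = circ C a b c"
  define B where "B = circ C a b x"
  define Cc where "Cc = circ C a c x"
  have A: "A \<in> C" "a \<in> A" "b \<in> A" "c \<in> A" using lp_circ(1)[OF lp assms(4,7,5)] A_def by auto
  have B: "B \<in> C" "a \<in> B" "b \<in> B" "x \<in> B" using lp_circ(1)[OF lp assms(4,8,6)] B_def by auto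
  have Cc: "Cc \<in> C" "a \<in> Cc" "c \<in> Cc" "x \<in> Cc" using lp_circ(1)[OF lp assms(5,9,6)] Cc_def by auto
  have xA: "x \<notin> A" using assms(10) A_def by simp
  have pB: "p \<in> B" and qC: "q \<in> Cc" using assms B_def Cc_def by auto
  have KA: "K \<inter> A = {a}" "a \<in> K"
    using assms(17,16) xA unfolding pencil_def tangent_at_def A_def by auto
  have sc: "\<not> par c a" "\<not> par c x" "\<not> par c b" "\<not> par b a" "\<not> par x a"
    using P(2) assms(5,9,7,4,6) by blast+
  have npa: "\<not> par p a" "\<not> par p x" "\<not> par p b"
    using lp_npar(1)[OF lp assms(11)] sc by blast+
  have npa2: "\<not> par a p" "\<not> par x p" using npa P(2) by blast+
  have nq: "\<not> par q a" "\<not> par q x" "\<not> par q c"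
    using lp_npar(1)[OF lp assms(13)] sc assms(4,7,8) by blast+
  have npq: "\<not> par p q" using lp_npar(1)[OF lp assms(11)] lp_npar(2)[OF lp assms(13)] assms(7) by blast
  have ab: "a \<noteq> b" "a \<noteq> x" "b \<noteq> x" "a \<noteq> c" "c \<noteq> x" using P(1) assms(4,6,8,5,9) by blast+
  have pne: "p \<noteq> a" "p \<noteq> x" "p \<noteq> b" using P(1) npa by blast+
  have pK: "p \<notin> K"
  proof
    assume "p \<in> K"
    then have "K = B" by (rule lp_three[OF lp assms(15) B(1) KA(2) assms(16) _ B(2,4) pB ab(2) pne(2)[symmetric] pne(1)[symmetric]])
    then have "b \<in> K \<inter> A" using A(3) B(3) by simp
    then show False using KA(1) ab(1) by auto
  qed
  have bc: "b \<noteq> c" using P(1) assms(7) by metis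
  have pA: "p \<notin> A"
  proof
    assume "p \<in> A"
    then have "p = c" by (rule lp_uniq[OF lp A(1) _ A(4) assms(11)])
    then have "c \<in> B" using pB by simp
    then have "B = A" by (rule lp_three[OF lp B(1) A(1) B(2,3) _ A(2,3,4) ab(1) bc ab(4)])
    then show False using B(4) xA by simp
  qed
  have ex3: "\<exists>!L. L \<in> C \<and> p \<in> L \<and> K \<inter> L = {x}" by (rule lp_ax3[OF lp assms(15,16) pK npa2(2)])
  then obtain D where D: "D \<in> C" "p \<in> D" "K \<inter> D = {x}" by (elim ex1E) blast
  have xD: "x \<in> D" using D(3) by blast
  have aD: "a \<notin> D"
  proof
    assume "a \<in> D"
    then have "D = B" by (rule lp_three[OF lp D(1) B(1) _ xD D(2) B(2,4) pB ab(2) pne(2)[symmetric] pne(1)[symmetric]])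
    then have "a \<in> K \<inter> D" using KA(2) B(2) by simp
    then show False using D(3) ab(2) by auto
  qed
  have KpA: "K \<in> pencil C a A" using assms(17) A_def by simp
  have ApA: "A \<in> pencil C a A" using A unfolding pencil_def tangent_at_def by auto
  have axC: "\<exists>!M. M \<in> pencil C p K \<and> (\<exists>y. M \<inter> L = {y})"
    if "K \<in> C" "L \<in> C" "p \<in> K" "p \<notin> L" for K L p
    using that by (intro assms(2)[unfolded axiom_C_def, rule_format]) simp_all
  have Cax: "\<exists>!M. M \<in> pencil C a A \<and> (\<exists>y. M \<inter> D = {y})"
    by (rule axC[OF A(1) D(1) A(2) aD])
  have Cuniq: "M = M'" if "M \<in> pencil C a A" "M \<inter> D = {y}" "M' \<in> pencil C a A" "M' \<inter> D = {y'}" for M M' y y'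
  proof -
    from Cax obtain M0 where "\<And>N. N \<in> pencil C a A \<and> (\<exists>y. N \<inter> D = {y}) \<Longrightarrow> N = M0"
      by (elim ex1E) blast
    then have "M = M0" "M' = M0" using that by blast+
    then show ?thesis by simp
  qed
  have DA: "\<not> (\<exists>y. D \<inter> A = {y})"
  proof
    assume "\<exists>y. D \<inter> A = {y}"
    then obtain y where "A \<inter> D = {y}" by (auto simp add: Int_commute)
    then have "K = A" using Cuniq[OF KpA D(3) ApA] by simp
    then show False using xA assms(16) by simp
  qed
  obtain M1 y1 where M1: "M1 \<in> pencil C p D" "M1 \<inter> A = {y1}"
    using axC[OF D(1) A(1) D(2) pA] by blast
  have M1C: "M1 \<in> C" "p \<in> M1" using M1(1) unfolding pencil_def tangent_at_def by auto
  have M1D: "M1 \<inter> D = {p}"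
    using M1 DA unfolding pencil_def tangent_at_def by auto
  have y1a: "y1 \<noteq> a"
  proof
    assume "y1 = a"
    then have "M1 \<in> pencil C a A" using M1 M1C A unfolding pencil_def tangent_at_def by auto
    then have "K = M1" using Cuniq[OF KpA D(3) _ M1D] by simp
    then show False using pK M1C by simp
  qed
  have "\<exists>Z\<in>C. a \<in> Z \<and> x \<in> Z \<and> p \<in> Z \<and> y1 \<in> Z"
    by (rule S_app[OF assms(3) A(1) assms(15) D(1) M1C(1)])
       (use KA(1) D(3) M1D M1(2) npa2(1) in \<open>simp_all add: Int_commute[of D M1] Int_commute[of A K]\<close>)
  then obtain Z1 where Z1: "Z1 \<in> C" "a \<in> Z1" "x \<in> Z1" "p \<in> Z1" "y1 \<in> Z1" by blast
  have "Z1 = B" by (rule lp_three[OF lp Z1(1) B(1) Z1(2,3,4) B(2,4) pB ab(2) pne(2)[symmetric] pne(1)[symmetric]])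
  then have y1B: "y1 \<in> B" using Z1 by simp
  have y1A: "y1 \<in> A" using M1(2) by blast
  have y1b: "y1 = b"
  proof (rule ccontr)
    assume "y1 \<noteq> b"
    have "B = A" by (rule lp_three[OF lp B(1) A(1) B(2,3) y1B A(2,3) y1A ab(1) \<open>y1 \<noteq> b\<close>[symmetric] y1a[symmetric]])
    then show False using B(4) xA by simp
  qed
  obtain q' where q': "q' \<in> D" "par q' b"
    using lp_ax4[OF lp D(1), of b] by blast
  have bM1: "b \<in> M1" using M1(2) y1b by blast
  have q'A: "q' \<notin> A"
  proof
    assume "q' \<in> A"
    then have "q' = b" by (rule lp_uniq[OF lp A(1) _ A(3) q'(2)])
    then have "b \<in> M1 \<inter> D" using bM1 q'(1) by simp
    then have "b = p" using M1D by simp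
    then show False using pne by simp
  qed
  have q'b: "q' \<noteq> b" using q'A A(3) by blast
  obtain M2 y2 where M2: "M2 \<in> pencil C q' D" "M2 \<inter> A = {y2}"
    using axC[OF D(1) A(1) q'(1) q'A] by blast
  have M2C: "M2 \<in> C" "q' \<in> M2" using M2(1) unfolding pencil_def tangent_at_def by auto
  have M2D: "D \<inter> M2 = {q'}"
    using M2 DA unfolding pencil_def tangent_at_def by (auto simp: Int_commute)
  have py2: "par p y2"
  proof (rule ccontr)
    assume np: "\<not> par p y2"
    have "\<exists>Z\<in>C. p \<in> Z \<and> q' \<in> Z \<and> y2 \<in> Z \<and> b \<in> Z"
      by (rule S_app[OF assms(3) M1C(1) D(1) M2C(1) A(1)])
         (use M1D M2D M2(2) M1(2) y1b np in \<open>simp_all add: Int_commute[of A M1] Int_commute[of M2 A]\<close>)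
    then obtain Z where Z: "Z \<in> C" "q' \<in> Z" "b \<in> Z" by blast
    have "q' = b" by (rule lp_uniq[OF lp Z q'(2)])
    then show False using q'b by simp
  qed
  have y2A: "y2 \<in> A" using M2(2) by blast
  have "par y2 c" by (rule P(3)[OF P(2)[OF py2] assms(11)])
  then have y2c: "y2 = c" by (rule lp_uniq[OF lp A(1) y2A A(4)])
  have naq': "\<not> par a q'" using lp_npar(2)[OF lp q'(2) sc(4)] .
  have "\<exists>Z\<in>C. a \<in> Z \<and> x \<in> Z \<and> q' \<in> Z \<and> c \<in> Z"
    by (rule S_app[OF assms(3) A(1) assms(15) D(1) M2C(1)])
       (use KA(1) D(3) M2D M2(2) y2c naq' in \<open>simp_all add: Int_commute[of A K]\<close>)
  then obtain Z3 where Z3: "Z3 \<in> C" "a \<in> Z3" "x \<in> Z3" "q' \<in> Z3" "c \<in> Z3" by blast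
  have "Z3 = Cc" by (rule lp_three[OF lp Z3(1) Cc(1) Z3(2,3,5) Cc(2,4,3) ab(2) ab(5)[symmetric] ab(4)])
  then have "q' \<in> Cc" using Z3 by simp
  moreover have "par q' q" using P(3)[OF q'(2) P(2)[OF assms(13)]] .
  ultimately have "q' = q" by (rule lp_uniq[OF lp Cc(1) _ qC])
  then have qD: "q \<in> D" using q' by simp
  have "D = circ C p q x" using lp_circ(2)[OF lp npq nq(2) npa(2) D(1) D(2) qD xD] .
  then show ?thesis using D(3) by simp
qed

end
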